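(* Let $k$ be a positive integer with $3\mid k$. Then $S_3(k;3)\ge 3k-3$.
   Context: Let $k,r$ be positive integers with $r\mid k$. A solution to $\mathcal{E}$ is a $k$-tuple $(x_1,\dots,x_k)$ of positive integers (not necessarily distinct) with $\sum_{i=1}^{k-1}x_i=x_k$; it lies in $[1,n]$ if all $x_i\in\{1,\dots,n\}$. Given a coloring $\chi$ of $[1,n]$ with colors in $\{0,1,\dots,r-1\}$ (viewed as integers), a solution is $r$-zero-sum if $\sum_{i=1}^k\chi(x_i)\equiv 0\pmod r$. $S_3(k;r)$ denotes the least positive integer $n$ such that every coloring $\chi:[1,n]\to\{0,1,\dots,r-1\}$ admits an $r$-zero-sum solution to $\mathcal{E}$ in $[1,n]$. *)

theory Defs
  imports Main
begin

definition solution_in :: "nat \<Rightarrow> nat \<Rightarrow> (nat \<Rightarrow> nat) \<Rightarrow> bool" where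
  "solution_in k n x \<longleftrightarrow> (\<forall>i\<in>{1..k}. x i \<in> {1..n}) \<and> (\<Sum>i=1..k-1. x i) = x k"

definition zero_sum :: "nat \<Rightarrow> nat \<Rightarrow> (nat \<Rightarrow> nat) \<Rightarrow> (nat \<Rightarrow> nat) \<Rightarrow> bool" where
  "zero_sum k r chi x \<longleftrightarrow> (\<Sum>i=1..k. chi (x i)) mod r = 0"

definition zs_property :: "nat \<Rightarrow> nat \<Rightarrow> nat \<Rightarrow> bool" where
  "zs_property k r n \<longleftrightarrow>
     (\<forall>chi :: nat \<Rightarrow> nat. (\<forall>y\<in>{1..n}. chi y < r) \<longrightarrow>
        (\<exists>x. solution_in k n x \<and> zero_sum k r chi x))"

definition S3 :: "nat \<Rightarrow> nat \<Rightarrow> nat" where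
  "S3 k r = (LEAST n. 0 < n \<and> zs_property k r n)"

end

theory Submission
  imports Defs
begin

definition chi :: "nat \<Rightarrow> nat \<Rightarrow> nat" where
  "chi k y = (if y \<le> k - 1 then (y + 2) mod 3
             else if y \<le> 2*k - 3 then (if y mod 3 = 1 then 0 else 1)
             else (2*y + 1) mod 3)"

lemma sum_mod3_cong:
  assumes "\<And>i. i \<in> A \<Longrightarrow> f i mod 3 = g i mod 3"
  shows "sum f A mod 3 = (sum g A :: nat) mod 3"
proof -
  have "sum f A mod 3 = (\<Sum>i\<in>A. f i mod 3) mod 3" by (simp add: mod_sum_eq)
  also have "\<dots> = (\<Sum>i\<in>A. g i mod 3) mod 3" using assms by (simp cong: sum.cong)
  also have "\<dots> = sum g A mod 3" by (simp add: mod_sum_eq)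
  finally show ?thesis .
qed

lemma arA: assumes k: "k = 3*m + 3" and l: "k-1 \<le> S" and u: "S \<le> 3*k-4"
  shows "(S + 2*(k-1) + chi k S) mod 3 \<noteq> 0"
proof -
  have k1: "k - 1 = 3*m+2" using k by simp
  consider "S \<le> k - 1" | "\<not> S \<le> k-1" "S \<le> 2*k-3" | "\<not> S \<le> k-1" "\<not> S \<le> 2*k-3" by blast
  then show ?thesis
  proof cases
    case 1
    hence S: "S = 3*m+2" using l k1 by simp
    have c: "chi k S = ((3*m+2)+2) mod 3" using 1 S by (simp add: chi_def)
    have "((3*m+2) + 2*(3*m+2) + ((3*m+2)+2) mod 3) mod 3 \<noteq> (0::nat)" by presburger
    thus ?thesis using c k1 S by metis
  next
    case 2
    have c: "chi k S = (if S mod 3 = 1 then 0 else 1)" using 2 by (simp add: chi_def)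
    have "\<And>S::nat. (S + 2*(3*m+2) + (if S mod 3 = 1 then 0 else 1)) mod 3 \<noteq> 0" by presburger
    thus ?thesis unfolding c k1 by blast
  next
    case 3
    have c: "chi k S = (2*S+1) mod 3" using 3 by (simp add: chi_def)
    have "\<And>S::nat. (S + 2*(3*m+2) + (2*S+1) mod 3) mod 3 \<noteq> 0" by presburger
    thus ?thesis unfolding c k1 by blast
  qed
qed
lemma arB: assumes k: "k = 3*m + 3" and y: "k \<le> y" and T: "k-2 \<le> T" and u: "y + T \<le> 3*k-4"
  shows "(chi k y + (T + 2*(k-2)) + chi k (y+T)) mod 3 \<noteq> 0"
proof -
  have k2: "k - 2 = 3*m+1" using k by simp
  have c2: "chi k (y+T) = (2*(y+T)+1) mod 3" using k y T by (simp add: chi_def)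
  show ?thesis
  proof (cases "y \<le> 2*k-3")
    case True
    have c: "chi k y = (if y mod 3 = 1 then 0 else 1)" using True y k by (simp add: chi_def)
    have "\<And>y T::nat. ((if y mod 3 = 1 then 0 else 1) + (T + 2*(3*m+1)) + (2*(y+T)+1) mod 3) mod 3 \<noteq> 0"
      by presburger
    thus ?thesis unfolding c c2 k2 by blast
  next
    case False
    hence yy: "y = 6*m+4" using k T u by simp
    have c: "chi k y = (2*(6*m+4)+1) mod 3" using False k yy by (simp add: chi_def)
    have c2: "chi k (y+T) = (2*((6*m+4)+T)+1) mod 3" using c2 yy by simp
    have "\<And>T::nat. ((2*(6*m+4)+1) mod 3 + (T + 2*(3*m+1)) + (2*((6*m+4)+T)+1) mod 3) mod 3 \<noteq> 0"
      by presburger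
    thus ?thesis unfolding c c2 k2 by blast
  qed
qed

lemma lower_core:
  fixes k n :: nat and x :: "nat \<Rightarrow> nat"
  assumes k3: "3 \<le> k" and dv: "3 dvd k" and nle: "n \<le> 3*k-4" and sol: "solution_in k n x"
  shows "(\<Sum>i=1..k. chi k (x i)) mod 3 \<noteq> 0"
proof -
  define I where "I = {1..k-1}"
  define S where "S = x k"
  have fI: "finite I" and cI: "card I = k - 1" unfolding I_def by auto
  have xk: "S = sum x I" using sol unfolding solution_in_def S_def I_def by auto
  have bnd: "\<And>i. i \<in> I \<Longrightarrow> 1 \<le> x i \<and> x i \<le> n" using sol k3 unfolding solution_in_def I_def by auto
  have Sb: "1 \<le> S \<and> S \<le> n" using sol k3 unfolding solution_in_def S_def by auto
  have kk: "k = Suc (k-1)" using k3 by simp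
  have spl: "(\<Sum>i=1..k. chi k (x i)) = (\<Sum>i\<in>I. chi k (x i)) + chi k S"
    unfolding I_def S_def by (subst kk, subst sum.cl_ivl_Suc, use k3 in auto)
  obtain m0 where km0: "k = 3*m0" using dv by auto
  define m where "m = m0 - 1"
  have km: "k = 3*m + 3" using km0 k3 unfolding m_def by simp
  show ?thesis
  proof (cases "\<exists>j\<in>I. k \<le> x j")
    case False
    hence sm: "\<And>i. i \<in> I \<Longrightarrow> x i \<le> k - 1" by force
    have "(\<Sum>i\<in>I. chi k (x i)) mod 3 = (\<Sum>i\<in>I. x i + 2) mod 3"
      by (rule sum_mod3_cong) (use sm in \<open>simp add: chi_def\<close>)
    also have "(\<Sum>i\<in>I. x i + 2) = S + 2*(k-1)" using xk cI by (simp only: sum.distrib) simp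
    finally have A: "(\<Sum>i\<in>I. chi k (x i)) mod 3 = (S + 2*(k-1)) mod 3" .
    have "(\<Sum>i\<in>I. (1::nat)) \<le> sum x I" by (rule sum_mono) (use bnd in auto)
    hence Sge: "k - 1 \<le> S" using cI xk by simp
    have "((\<Sum>i\<in>I. chi k (x i)) + chi k S) mod 3 = ((\<Sum>i\<in>I. chi k (x i)) mod 3 + chi k S) mod 3"
      by (simp add: mod_add_left_eq)
    also have "\<dots> = (S + 2*(k-1) + chi k S) mod 3" unfolding A by (simp add: mod_add_left_eq)
    finally show ?thesis unfolding spl using arA[OF km Sge] Sb nle by simp
  next
    case True
    then obtain j where jI: "j \<in> I" and jk: "k \<le> x j" by auto
    define T where "T = sum x (I - {j})"
    have ST: "S = x j + T" unfolding T_def xk using sum.remove[OF fI jI] by simp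
    have cIj: "card (I - {j}) = k - 2" using cI jI fI by simp
    have "(\<Sum>i\<in>I-{j}. (1::nat)) \<le> T" unfolding T_def by (rule sum_mono) (use bnd in auto)
    hence Tge: "k - 2 \<le> T" using cIj by simp
    have sm: "x i \<le> k - 1" if iI: "i \<in> I - {j}" for i
    proof (rule ccontr)
      assume "\<not> x i \<le> k - 1"
      hence xi: "k \<le> x i" by simp
      have fIj: "finite (I - {j})" using fI by simp
      have "T = x i + sum x (I - {j} - {i})" unfolding T_def using sum.remove[OF fIj iI] by simp
      moreover have "card (I - {j} - {i}) = k - 3" using cIj iI fIj by simp
      moreover have "(\<Sum>i\<in>I-{j}-{i}. (1::nat)) \<le> sum x (I - {j} - {i})"
        by (rule sum_mono) (use bnd in auto)
      ultimately have "k + (k - 3) \<le> T" using xi by simp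
      thus False using ST jk Sb nle k3 by linarith
    qed
    have "(\<Sum>i\<in>I-{j}. chi k (x i)) mod 3 = (\<Sum>i\<in>I-{j}. x i + 2) mod 3"
      by (rule sum_mod3_cong) (use sm in \<open>simp add: chi_def\<close>)
    also have "(\<Sum>i\<in>I-{j}. x i + 2) = T + 2*(k-2)" using cIj unfolding T_def by (simp only: sum.distrib) simp
    finally have A: "(\<Sum>i\<in>I-{j}. chi k (x i)) mod 3 = (T + 2*(k-2)) mod 3" .
    have sp2: "(\<Sum>i\<in>I. chi k (x i)) = chi k (x j) + (\<Sum>i\<in>I-{j}. chi k (x i))"
      using sum.remove[OF fI jI] by simp
    have "(chi k (x j) + (\<Sum>i\<in>I-{j}. chi k (x i)) + chi k S) mod 3
          = (chi k (x j) + (\<Sum>i\<in>I-{j}. chi k (x i)) mod 3 + chi k S) mod 3"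
      by (metis mod_add_left_eq mod_add_right_eq)
    also have "\<dots> = (chi k (x j) + (T + 2*(k-2)) + chi k (x j + T)) mod 3"
      unfolding A ST by (metis mod_add_left_eq mod_add_right_eq)
    finally show ?thesis unfolding spl sp2 using arB[OF km jk Tge] ST Sb nle by simp
  qed
qed

lemma lower:
  assumes "3 \<le> k" "3 dvd k" "n \<le> 3*k-4"
  shows "\<not> zs_property k 3 n"
proof
  assume "zs_property k 3 n"
  moreover have "\<forall>y\<in>{1..n}. chi k y < 3" unfolding chi_def by auto
  ultimately obtain x where x1: "solution_in k n x" and x2: "zero_sum k 3 (chi k) x"
    unfolding zs_property_def by blast
  show False using lower_core[OF assms x1] x2 unfolding zero_sum_def by simp
qed


lemma less3E: "c < (3::nat) \<Longrightarrow> (c = 0 \<Longrightarrow> P) \<Longrightarrow> (c = 1 \<Longrightarrow> P) \<Longrightarrow> (c = 2 \<Longrightarrow> P) \<Longrightarrow> P"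
  by linarith

definition pairs10 :: "(nat \<times> nat) list" where
  "pairs10 = [(1,1), (1,2), (1,3), (1,4), (1,5), (1,6), (1,7), (1,8), (1,9), (2,2), (2,3), (2,4), (2,5), (2,6), (2,7), (2,8), (3,3), (3,4), (3,5), (3,6), (3,7), (4,4), (4,5), (4,6), (5,5)]"

lemma brute3:
  fixes f :: "nat \<Rightarrow> nat"
  assumes "f 1 < (3::nat)" "f 2 < (3::nat)" "f 3 < (3::nat)" "f 4 < (3::nat)" "f 5 < (3::nat)" "f 6 < (3::nat)" "f 7 < (3::nat)" "f 8 < (3::nat)" "f 9 < (3::nat)" "f 10 < (3::nat)"
  shows "\<exists>p\<in>set pairs10. (f (fst p) + f (snd p) + f (fst p + snd p)) mod 3 = 0"
  using assms unfolding pairs10_def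
  apply simp
  apply (erule less3E; simp?)+
  done

lemma gen_sol:
  fixes f :: "nat \<Rightarrow> nat"
  assumes k3: "3 \<le> k" and dv: "3 dvd k" and a: "1 \<le> a" "a \<le> n" and b: "1 \<le> b" "b \<le> n"
    and c: "c \<le> n" "c = 2*a + (k-3)*b" and fe: "f a = f c"
  shows "\<exists>x. solution_in k n x \<and> zero_sum k 3 f x"
proof -
  define x where "x = (\<lambda>i::nat. if i \<le> 2 then a else if i < k then b else c)"
  have U: "{1..k-1} = {1,2} \<union> {3..k-1}" using k3 by auto
  have D: "{1,2} \<inter> {3..k-1} = ({}::nat set)" by auto
  have s2: "(\<Sum>i\<in>{3..k-1}. g i) = (k-3) * b" if "\<And>i. i \<in> {3..k-1} \<Longrightarrow> g i = b" for g :: "nat \<Rightarrow> nat" and b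
  proof -
    have "(\<Sum>i\<in>{3..k-1}. g i) = (\<Sum>i\<in>{3..k-1}. b)" using that by (rule sum.cong[OF refl])
    thus ?thesis using k3 by simp
  qed
  have sx: "(\<Sum>i=1..k-1. x i) = 2*a + (k-3)*b"
  proof -
    have "(\<Sum>i=1..k-1. x i) = (\<Sum>i\<in>{1,2}. x i) + (\<Sum>i\<in>{3..k-1}. x i)"
      unfolding U by (rule sum.union_disjoint) (use D in auto)
    also have "(\<Sum>i\<in>{3..k-1}. x i) = (k-3)*b" by (rule s2) (auto simp: x_def)
    finally show ?thesis by (simp add: x_def)
  qed
  have sf: "(\<Sum>i=1..k-1. f (x i)) = 2*f a + (k-3)*f b"
  proof -
    have "(\<Sum>i=1..k-1. f (x i)) = (\<Sum>i\<in>{1,2}. f (x i)) + (\<Sum>i\<in>{3..k-1}. f (x i))"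
      unfolding U by (rule sum.union_disjoint) (use D in auto)
    also have "(\<Sum>i\<in>{3..k-1}. f (x i)) = (k-3)*f b" by (rule s2) (auto simp: x_def)
    finally show ?thesis by (simp add: x_def)
  qed
  have kk: "k = Suc (k-1)" using k3 by simp
  have xk: "x k = c" using k3 by (simp add: x_def)
  have tot: "(\<Sum>i=1..k. f (x i)) = (\<Sum>i=1..k-1. f (x i)) + f (x k)"
    by (subst kk, subst sum.cl_ivl_Suc, use k3 in auto)
  obtain t where t: "k - 3 = 3*t" using dv k3 by (metis dvd_diff_nat dvd_refl dvd_def)
  have sol: "solution_in k n x" unfolding solution_in_def
  proof
    show "\<forall>i\<in>{1..k}. x i \<in> {1..n}" using a b c by (auto simp: x_def)
    show "(\<Sum>i=1..k-1. x i) = x k" using sx xk c by simp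
  qed
  have "(\<Sum>i=1..k. f (x i)) = 3 * (f a + t * f b)" unfolding tot sf xk t fe[symmetric] by simp
  hence "zero_sum k 3 f x" unfolding zero_sum_def by simp
  with sol show ?thesis by blast
qed

lemma gen3:
  fixes f :: "nat \<Rightarrow> nat"
  assumes "1 \<le> a" "1 \<le> b" "a + b \<le> n" "(f a + f b + f (a+b)) mod 3 = 0"
  shows "\<exists>x. solution_in 3 n x \<and> zero_sum 3 3 f x"
proof -
  define x where "x = (\<lambda>i::nat. if i = 1 then a else if i = 2 then b else a + b)"
  have e2: "{1..2::nat} = {1,2}" and e3: "{1..3::nat} = {1,2,3}" by auto
  have e2': "{1..3-1::nat} = {1,2}" by auto
  have "solution_in 3 n x" unfolding solution_in_def e2' e3 using assms
    by (auto simp: x_def)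
  moreover have "zero_sum 3 3 f x"
  proof -
    have "(\<Sum>i\<in>{1,2,3}. f (x i)) = f a + f b + f (a+b)" by (simp add: x_def)
    thus ?thesis unfolding zero_sum_def e3 using assms(4) by simp
  qed
  ultimately show ?thesis by blast
qed

lemma upper3: "zs_property 3 3 10"
  unfolding zs_property_def
proof (intro allI impI)
  fix f :: "nat \<Rightarrow> nat"
  assume h: "\<forall>y\<in>{1..10}. f y < 3"
  have "\<exists>p\<in>set pairs10. (f (fst p) + f (snd p) + f (fst p + snd p)) mod 3 = 0"
    by (rule brute3) (use h in auto)
  moreover have "\<forall>p\<in>set pairs10. 1 \<le> fst p \<and> 1 \<le> snd p \<and> fst p + snd p \<le> 10" by (simp add: pairs10_def)
  ultimately obtain a b where "1 \<le> a" "1 \<le> b" "a + b \<le> 10" "(f a + f b + f (a + b)) mod 3 = 0"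
    by fastforce
  thus "\<exists>x. solution_in 3 10 x \<and> zero_sum 3 3 f x" by (rule gen3)
qed

lemma pairsol:
  fixes f :: "nat \<Rightarrow> nat"
  assumes k3: "6 \<le> k" and dv: "3 dvd k" and ci: "1 \<le> ci" and cb: "2*ci + b = cj" "1 \<le> b" and cj: "cj \<le> 15"
    and fe: "f (ci * (k-3)) = f (cj * (k-3))"
  shows "\<exists>x. solution_in k (15*(k-3)) x \<and> zero_sum k 3 f x"
proof (rule gen_sol[where a = "ci*(k-3)" and b = b and c = "cj*(k-3)"])
  have "\<And>d::nat. (2*ci+b)*d = 2*(ci*d) + d*b" by (simp add: algebra_simps)
  thus "cj * (k - 3) = 2 * (ci * (k - 3)) + (k - 3) * b" using cb by blast
  show "1 \<le> ci * (k-3)" using ci k3 by simp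
  show "ci * (k-3) \<le> 15 * (k-3)" using cb cj by simp
  show "b \<le> 15 * (k-3)" using cb cj k3 by linarith
  show "cj * (k-3) \<le> 15 * (k-3)" using cj by simp
qed (use assms in auto)

lemma upper6:
  assumes k3: "6 \<le> k" and dv: "3 dvd k"
  shows "zs_property k 3 (15*(k-3))"
  unfolding zs_property_def
proof (intro allI impI)
  fix f :: "nat \<Rightarrow> nat"
  assume h: "\<forall>y\<in>{1..15*(k-3)}. f y < 3"
  have h1: "f (1*(k-3)) < 3" "f (3*(k-3)) < 3" "f (7*(k-3)) < 3" "f (15*(k-3)) < 3"
    using h k3 by auto
  hence "f (1*(k-3)) = f (3*(k-3)) \<or> f (1*(k-3)) = f (7*(k-3)) \<or> f (1*(k-3)) = f (15*(k-3))
       \<or> f (3*(k-3)) = f (7*(k-3)) \<or> f (3*(k-3)) = f (15*(k-3)) \<or> f (7*(k-3)) = f (15*(k-3))"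
    by linarith
  thus "\<exists>x. solution_in k (15*(k-3)) x \<and> zero_sum k 3 f x"
  proof (elim disjE)
    assume e: "f (1*(k-3)) = f (3*(k-3))" show ?thesis by (rule pairsol[OF k3 dv _ _ _ _ e]) auto
  next
    assume e: "f (1*(k-3)) = f (7*(k-3))" show ?thesis by (rule pairsol[OF k3 dv _ _ _ _ e]) auto
  next
    assume e: "f (1*(k-3)) = f (15*(k-3))" show ?thesis by (rule pairsol[OF k3 dv _ _ _ _ e]) auto
  next
    assume e: "f (3*(k-3)) = f (7*(k-3))" show ?thesis by (rule pairsol[OF k3 dv _ _ _ _ e]) auto
  next
    assume e: "f (3*(k-3)) = f (15*(k-3))" show ?thesis by (rule pairsol[OF k3 dv _ _ _ _ e]) auto
  next
    assume e: "f (7*(k-3)) = f (15*(k-3))" show ?thesis by (rule pairsol[OF k3 dv _ _ _ _ e]) auto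
  qed
qed

lemma upper:
  assumes "3 \<le> k" "3 dvd k"
  shows "\<exists>n. 0 < n \<and> zs_property k 3 n"
proof (cases "k = 3")
  case True thus ?thesis using upper3 by (intro exI[of _ 10]) simp
next
  case False
  hence k6: "6 \<le> k" using assms by (auto elim!: dvdE)
  show ?thesis using upper6[OF k6 assms(2)] k6 by (intro exI[of _ "15*(k-3)"]) simp
qed

theorem theorem4:
  fixes k :: nat
  assumes "0 < k" and "3 dvd k"
  shows "S3 k 3 \<ge> 3 * k - 3"
proof -
  have k3: "3 \<le> k" using assms by (auto elim!: dvdE)
  obtain n0 where n0: "0 < n0 \<and> zs_property k 3 n0" using upper[OF k3 assms(2)] by blast
  have P: "0 < S3 k 3 \<and> zs_property k 3 (S3 k 3)" unfolding S3_def by (rule LeastI[of _ n0]) (rule n0)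
  show ?thesis
  proof (rule ccontr)
    assume "\<not> 3 * k - 3 \<le> S3 k 3"
    hence "S3 k 3 \<le> 3*k - 4" by simp
    thus False using lower[OF k3 assms(2)] P by blast
  qed
qed

end
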